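(* There exist absolute constants $c_1,c_2,C_0>0$ such that the following holds. Suppose $w$ is normalized so that $\sum_{i=1}^n\log w_i=0$, and suppose $\delta\le e^{-1}$, $C_{n,\delta}\ge c_1\log(n/\delta)$, and $k\ge c_2\, b\,(C_{n,\delta}+1)\max\{\Omega_{\max},E_{\max}\}$. Then with probability at least $1-\delta$, all $R_{ij}\in(0,\infty)$ and $$\log\widehat W-\log w=L^\dagger B V(F-p)+L^\dagger B\Delta,\qquad \|\Delta\|_\infty\le C_0\frac{b\,C_{n,\delta}}{k}.$$
   Context: $G=(V,E)$ is an undirected connected graph on $V=\{1,\dots,n\}$, each edge with a fixed orientation $(i,j)$; $B\in\mathbb{R}^{n\times|E|}$ is the incidence matrix (column of edge $(i,j)$ has $+1$ in row $i$, $-1$ in row $j$, zeros elsewhere), $L=BB^T$, $L^\dagger$ its Moore–Penrose pseudoinverse. Weights $w$ are positive with $b\ge\max_{i,j}w_i/w_j$. For each edge $(i,j)$, $k$ independent comparisons are made, $i$ winning each with probability $p_{ij}=w_i/(w_i+w_j)$ (independent across edges); $F_{ij}$ is the fraction won by $i$, $F_{ji}=1-F_{ij}$, $R_{ij}=F_{ij}/F_{ji}$, $\rho_{ij}=w_i/w_j$, $v_{ij}=\rho_{ij}+2+\rho_{ij}^{-1}$. $F,p,R,\rho\in\mathbb{R}^{|E|}$ stack these quantities over edges in the orientation order, $V$ is the $|E|\times|E|$ diagonal matrix with entries $v_{ij}$. The estimator is $\log\widehat W=L^\dagger B\log R$ (entrywise logarithms). $\Delta:=\log R-\log\rho-V(F-p)\in\mathbb{R}^{|E|}$.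 $\Omega_{\max}$ is the maximum effective resistance $(e_i-e_j)^TL^\dagger(e_i-e_j)$ over pairs, $E_{\max}=\max_{i,j}|E_{ij}|$ where $E_{ij}$ is the set of edges on at least one simple path from $i$ to $j$. $C_{n,\delta}$ is a parameter. *)

theory Defs
  imports "Jordan_Normal_Form.Matrix" "HOL-Probability.Product_PMF"
begin

hide_type (open) Finite_Cartesian_Product.vec
hide_const (open) Finite_Cartesian_Product.mat Finite_Cartesian_Product.vec Finite_Cartesian_Product.transpose Finite_Cartesian_Product.vec_nth

text \<open>Vertices are 0..<n (paper vertex i corresponds to index i-1).
  The oriented edge list Es has length m = |E|; edge number e is (fst (Es!e), snd (Es!e)).\<close>

definition adjacent :: "(nat \<times> nat) list \<Rightarrow> nat \<Rightarrow> nat \<Rightarrow> bool" where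
  "adjacent Es u v \<longleftrightarrow> (u, v) \<in> set Es \<or> (v, u) \<in> set Es"

definition simple_graph_edges :: "nat \<Rightarrow> (nat \<times> nat) list \<Rightarrow> bool" where
  "simple_graph_edges n Es \<longleftrightarrow>
     (\<forall>(i, j) \<in> set Es. i < n \<and> j < n \<and> i \<noteq> j) \<and>
     distinct (map (\<lambda>(i, j). {i, j}) Es)"

definition connected_graph :: "nat \<Rightarrow> (nat \<times> nat) list \<Rightarrow> bool" where
  "connected_graph n Es \<longleftrightarrow>
     (\<forall>i<n. \<forall>j<n. (i, j) \<in> {(u, v). adjacent Es u v}\<^sup>*)"

definition incidence :: "nat \<Rightarrow> (nat \<times> nat) list \<Rightarrow> real mat" where
  "incidence n Es = mat n (length Es)
     (\<lambda>(i, e). if i = fst (Es ! e) then 1 else if i = snd (Es ! e) then -1 else 0)"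

definition laplacian :: "nat \<Rightarrow> (nat \<times> nat) list \<Rightarrow> real mat" where
  "laplacian n Es = incidence n Es * transpose_mat (incidence n Es)"

definition is_pinv :: "real mat \<Rightarrow> real mat \<Rightarrow> bool" where
  "is_pinv A X \<longleftrightarrow> X \<in> carrier_mat (dim_col A) (dim_row A) \<and>
     A * X * A = A \<and> X * A * X = X \<and>
     transpose_mat (A * X) = A * X \<and> transpose_mat (X * A) = X * A"

definition pinv :: "real mat \<Rightarrow> real mat" where
  "pinv A = (THE X. is_pinv A X)"

definition eff_res :: "nat \<Rightarrow> (nat \<times> nat) list \<Rightarrow> nat \<Rightarrow> nat \<Rightarrow> real" where
  "eff_res n Es i j = (let d = unit_vec n i - unit_vec n j in
     scalar_prod d (mult_mat_vec (pinv (laplacian n Es)) d))"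

definition Omega_max :: "nat \<Rightarrow> (nat \<times> nat) list \<Rightarrow> real" where
  "Omega_max n Es = Max {eff_res n Es i j | i j. i < n \<and> j < n}"

definition simple_path :: "(nat \<times> nat) list \<Rightarrow> nat \<Rightarrow> nat \<Rightarrow> nat list \<Rightarrow> bool" where
  "simple_path Es i j ps \<longleftrightarrow> ps \<noteq> [] \<and> hd ps = i \<and> last ps = j \<and> distinct ps \<and>
     (\<forall>t. Suc t < length ps \<longrightarrow> adjacent Es (ps ! t) (ps ! Suc t))"

definition edge_on_path :: "(nat \<times> nat) list \<Rightarrow> nat \<Rightarrow> nat list \<Rightarrow> bool" where
  "edge_on_path Es e ps \<longleftrightarrow>
     (\<exists>t. Suc t < length ps \<and> {ps ! t, ps ! Suc t} = {fst (Es ! e), snd (Es ! e)})"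

definition path_edges :: "(nat \<times> nat) list \<Rightarrow> nat \<Rightarrow> nat \<Rightarrow> nat set" where
  "path_edges Es i j = {e. e < length Es \<and> (\<exists>ps. simple_path Es i j ps \<and> edge_on_path Es e ps)}"

definition E_max :: "nat \<Rightarrow> (nat \<times> nat) list \<Rightarrow> nat" where
  "E_max n Es = Max {card (path_edges Es i j) | i j. i < n \<and> j < n}"

text \<open>Edge quantities; the random outcome is X e = number of wins of fst (Es!e) over snd (Es!e).\<close>
definition p_edge :: "(nat \<Rightarrow> real) \<Rightarrow> (nat \<times> nat) list \<Rightarrow> nat \<Rightarrow> real" where
  "p_edge w Es e = w (fst (Es ! e)) / (w (fst (Es ! e)) + w (snd (Es ! e)))"

definition rho_edge :: "(nat \<Rightarrow> real) \<Rightarrow> (nat \<times> nat) list \<Rightarrow> nat \<Rightarrow> real" where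
  "rho_edge w Es e = w (fst (Es ! e)) / w (snd (Es ! e))"

definition v_edge :: "(nat \<Rightarrow> real) \<Rightarrow> (nat \<times> nat) list \<Rightarrow> nat \<Rightarrow> real" where
  "v_edge w Es e = rho_edge w Es e + 2 + 1 / rho_edge w Es e"

definition F_edge :: "nat \<Rightarrow> (nat \<Rightarrow> nat) \<Rightarrow> nat \<Rightarrow> real" where
  "F_edge k X e = real (X e) / real k"

definition R_edge :: "nat \<Rightarrow> (nat \<Rightarrow> nat) \<Rightarrow> nat \<Rightarrow> real" where
  "R_edge k X e = F_edge k X e / (1 - F_edge k X e)"

definition comparisons :: "(nat \<Rightarrow> real) \<Rightarrow> (nat \<times> nat) list \<Rightarrow> nat \<Rightarrow> (nat \<Rightarrow> nat) pmf" where
  "comparisons w Es k = Pi_pmf {..<length Es} 0 (\<lambda>e. binomial_pmf k (p_edge w Es e))"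

definition Vmat :: "(nat \<Rightarrow> real) \<Rightarrow> (nat \<times> nat) list \<Rightarrow> real mat" where
  "Vmat w Es = mat (length Es) (length Es) (\<lambda>(e, f). if e = f then v_edge w Es e else 0)"

definition Fvec :: "(nat \<times> nat) list \<Rightarrow> nat \<Rightarrow> (nat \<Rightarrow> nat) \<Rightarrow> real vec" where
  "Fvec Es k X = vec (length Es) (F_edge k X)"

definition pvec :: "(nat \<Rightarrow> real) \<Rightarrow> (nat \<times> nat) list \<Rightarrow> real vec" where
  "pvec w Es = vec (length Es) (p_edge w Es)"

definition logR :: "(nat \<times> nat) list \<Rightarrow> nat \<Rightarrow> (nat \<Rightarrow> nat) \<Rightarrow> real vec" where
  "logR Es k X = vec (length Es) (\<lambda>e. ln (R_edge k X e))"

definition logrho :: "(nat \<Rightarrow> real) \<Rightarrow> (nat \<times> nat) list \<Rightarrow> real vec" where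
  "logrho w Es = vec (length Es) (\<lambda>e. ln (rho_edge w Es e))"

definition Delta :: "(nat \<Rightarrow> real) \<Rightarrow> (nat \<times> nat) list \<Rightarrow> nat \<Rightarrow> (nat \<Rightarrow> nat) \<Rightarrow> real vec" where
  "Delta w Es k X = logR Es k X - logrho w Es - mult_mat_vec (Vmat w Es) (Fvec Es k X - pvec w Es)"

definition logWhat :: "nat \<Rightarrow> (nat \<times> nat) list \<Rightarrow> nat \<Rightarrow> (nat \<Rightarrow> nat) \<Rightarrow> real vec" where
  "logWhat n Es k X = mult_mat_vec (pinv (laplacian n Es)) (mult_mat_vec (incidence n Es) (logR Es k X))"

definition logw :: "nat \<Rightarrow> (nat \<Rightarrow> real) \<Rightarrow> real vec" where
  "logw n w = vec n (\<lambda>i. ln (w i))"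

end

theory Submission
  imports Defs "Jordan_Normal_Form.Determinant"
begin

hide_type (open) Finite_Cartesian_Product.vec
hide_const (open) Finite_Cartesian_Product.mat Finite_Cartesian_Product.vec Finite_Cartesian_Product.transpose Finite_Cartesian_Product.vec_nth
unbundle no vec_syntax
hide_const (open) Finite_Cartesian_Product.row Finite_Cartesian_Product.column




lemma incidence_dims[simp]: "dim_row (incidence n Es) = n" "dim_col (incidence n Es) = length Es"
  by (simp_all add: incidence_def)

lemma incidence_carrier[simp]: "incidence n Es \<in> carrier_mat n (length Es)"
  by (rule carrier_matI) simp_all

lemma laplacian_dims[simp]: "dim_row (laplacian n Es) = n" "dim_col (laplacian n Es) = n"
  by (simp_all add: laplacian_def)

lemma laplacian_carrier[simp]: "laplacian n Es \<in> carrier_mat n n"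
  by (rule carrier_matI) simp_all

lemma laplacian_sym: "transpose_mat (laplacian n Es) = laplacian n Es"
  unfolding laplacian_def
  by (subst transpose_mult[of _ n "length Es"]) auto

lemma sum_two_pts:
  fixes x :: "nat \<Rightarrow> real"
  assumes "a < n" "b < n" "a \<noteq> b"
  shows "(\<Sum>i<n. (if i = a then 1 else if i = b then -1 else 0) * x i) = x a - x b"
proof -
  have "(\<Sum>i<n. (if i = a then 1 else if i = b then -1 else 0) * x i)
      = (\<Sum>i<n. (if i = a then x i else 0) - (if i = b then x i else 0))"
    using assms by (intro sum.cong) auto
  also have "\<dots> = x a - x b"
    using assms by (simp add: sum_subtractf)
  finally show ?thesis .
qed

lemma edge_bounds:
  assumes sg: "simple_graph_edges n Es" and e: "e < length Es"
  shows "fst (Es ! e) < n" "snd (Es ! e) < n" "fst (Es ! e) \<noteq> snd (Es ! e)"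
proof -
  have mem: "Es ! e \<in> set Es" using e by simp
  have all: "\<forall>(i, j) \<in> set Es. i < n \<and> j < n \<and> i \<noteq> j"
    using sg unfolding simple_graph_edges_def by blast
  obtain a b where ab: "Es ! e = (a, b)" by fastforce
  have "a < n \<and> b < n \<and> a \<noteq> b" using all mem ab by fastforce
  then show "fst (Es ! e) < n" "snd (Es ! e) < n" "fst (Es ! e) \<noteq> snd (Es ! e)"
    using ab by auto
qed

lemma BT_vec:
  assumes sg: "simple_graph_edges n Es" and x: "x \<in> carrier_vec n" and e: "e < length Es"
  shows "(transpose_mat (incidence n Es) *\<^sub>v x) $ e = x $ fst (Es ! e) - x $ snd (Es ! e)"
proof -
  note ab = edge_bounds[OF sg e]
  have "(transpose_mat (incidence n Es) *\<^sub>v x) $ e = col (incidence n Es) e \<bullet> x"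
    using e by simp
  also have "\<dots> = (\<Sum>i<n. (if i = fst (Es ! e) then 1 else if i = snd (Es ! e) then -1 else 0) * x $ i)"
  proof -
    have "col (incidence n Es) e \<bullet> x = (\<Sum>i\<in>{0..<n}. col (incidence n Es) e $ i * x $ i)"
      using x unfolding scalar_prod_def by simp
    also have "\<dots> = (\<Sum>i<n. (if i = fst (Es ! e) then 1 else if i = snd (Es ! e) then -1 else 0) * x $ i)"
      unfolding atLeast0LessThan
      by (rule sum.cong) (use e in \<open>simp_all add: incidence_def\<close>)
    finally show ?thesis .
  qed
  also have "\<dots> = x $ fst (Es ! e) - x $ snd (Es ! e)"
    by (rule sum_two_pts[OF ab])
  finally show ?thesis .
qed

lemma L_mult_vec: "x \<in> carrier_vec n \<Longrightarrow>
   laplacian n Es *\<^sub>v x = incidence n Es *\<^sub>v (transpose_mat (incidence n Es) *\<^sub>v x)"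
  unfolding laplacian_def
  by (rule assoc_mult_mat_vec[of _ n "length Es" _ n]) auto

definition onev :: "nat \<Rightarrow> real vec" where "onev n = vec n (\<lambda>_. 1)"

lemma onev_carrier[simp]: "onev n \<in> carrier_vec n" by (simp add: onev_def)

lemma L_one:
  assumes sg: "simple_graph_edges n Es"
  shows "laplacian n Es *\<^sub>v onev n = 0\<^sub>v n"
proof -
  have "(transpose_mat (incidence n Es) *\<^sub>v onev n) $ e = 0" if "e < length Es" for e
    using BT_vec[OF sg onev_carrier that] edge_bounds[OF sg that] by (simp add: onev_def)
  then have "transpose_mat (incidence n Es) *\<^sub>v onev n = 0\<^sub>v (length Es)"
    by (intro eq_vecI) auto
  then show ?thesis
    by (auto simp: L_mult_vec)
qed

lemma L_ker_BT:
  assumes x: "x \<in> carrier_vec n" and L: "laplacian n Es *\<^sub>v x = 0\<^sub>v n"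
  shows "transpose_mat (incidence n Es) *\<^sub>v x = 0\<^sub>v (length Es)"
proof -
  define y where "y = transpose_mat (incidence n Es) *\<^sub>v x"
  have y: "y \<in> carrier_vec (length Es)" unfolding y_def by (intro carrier_vecI) simp
  have "y \<bullet> y = x \<bullet> (incidence n Es *\<^sub>v y)"
    unfolding y_def by (rule transpose_vec_mult_scalar[OF incidence_carrier _ x]) (intro carrier_vecI, simp)
  also have "incidence n Es *\<^sub>v y = 0\<^sub>v n" using L L_mult_vec[OF x, of Es] unfolding y_def by simp
  also have "x \<bullet> 0\<^sub>v n = 0" using x by simp
  finally have yy: "y \<bullet> y = 0" .
  have dy: "dim_vec y = length Es" using y by simp
  have "(\<Sum>e\<in>{0..<length Es}. (y $ e)^2) = y \<bullet> y"
    unfolding scalar_prod_def dy by (simp add: power2_eq_square)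
  then have "(\<Sum>e\<in>{0..<length Es}. (y $ e)^2) = 0" using yy by simp
  then have "\<forall>e\<in>{0..<length Es}. (y $ e)^2 = 0"
    using sum_nonneg_eq_0_iff[of "{0..<length Es}" "\<lambda>e. (y $ e)^2"] by simp
  then show ?thesis unfolding y_def[symmetric] by (intro eq_vecI) (auto simp: dy)
qed

lemma L_ker_const:
  assumes sg: "simple_graph_edges n Es" and cg: "connected_graph n Es"
    and x: "x \<in> carrier_vec n" and L: "laplacian n Es *\<^sub>v x = 0\<^sub>v n"
    and i: "i < n" and j: "j < n"
  shows "x $ i = x $ j"
proof -
  have edge: "x $ u = x $ v" if "adjacent Es u v" for u v
  proof -
    have BT0: "transpose_mat (incidence n Es) *\<^sub>v x = 0\<^sub>v (length Es)"
      by (rule L_ker_BT[OF x L])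
    have *: "x $ fst (Es ! e) = x $ snd (Es ! e)" if "e < length Es" for e
    proof -
      have "(transpose_mat (incidence n Es) *\<^sub>v x) $ e = 0" using BT0 that by simp
      then show ?thesis using BT_vec[OF sg x that] by simp
    qed
    from that consider "(u, v) \<in> set Es" | "(v, u) \<in> set Es" unfolding adjacent_def by auto
    then show ?thesis
    proof cases
      case 1 then obtain e where "e < length Es" "Es ! e = (u, v)" by (auto simp: in_set_conv_nth)
      then show ?thesis using *[of e] by simp
    next
      case 2 then obtain e where "e < length Es" "Es ! e = (v, u)" by (auto simp: in_set_conv_nth)
      then show ?thesis using *[of e] by simp
    qed
  qed
  have "(i, j) \<in> {(u, v). adjacent Es u v}\<^sup>*" using cg i j unfolding connected_graph_def by auto
  then show ?thesis
  proof (induction rule: rtrancl_induct)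
    case base then show ?case by simp
  next
    case (step y z) then show ?case using edge[of y z] by simp
  qed
qed




lemma minus_zero_mat'[simp]: "(A :: real mat) \<in> carrier_mat nr nc \<Longrightarrow> A - 0\<^sub>m nr nc = A"
  by (intro eq_matI) auto

lemma pinv_construct:
  fixes L J Mi :: "real mat" and n :: nat
  defines "c \<equiv> 1 / real n"
  assumes Lc: "L \<in> carrier_mat n n" and Jc: "J \<in> carrier_mat n n" and Mc: "Mi \<in> carrier_mat n n"
    and n: "n > 0"
    and LJ: "L * J = 0\<^sub>m n n" and JL: "J * L = 0\<^sub>m n n" and JJ: "J * J = real n \<cdot>\<^sub>m J"
    and MiM: "Mi * (L + c \<cdot>\<^sub>m J) = 1\<^sub>m n" and MMi: "(L + c \<cdot>\<^sub>m J) * Mi = 1\<^sub>m n"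
    and LT: "transpose_mat L = L" and JT: "transpose_mat J = J"
  shows "is_pinv L (Mi - c \<cdot>\<^sub>m J)" "(Mi - c \<cdot>\<^sub>m J) * L = 1\<^sub>m n - c \<cdot>\<^sub>m J"
proof -
  have cJc: "c \<cdot>\<^sub>m J \<in> carrier_mat n n" using Jc by simp
  have Mc': "L + c \<cdot>\<^sub>m J \<in> carrier_mat n n" using Lc Jc by simp
  have cn: "c * real n = 1" using n unfolding c_def by simp
  have JJc: "J * (c \<cdot>\<^sub>m J) = J"
  proof -
    have "J * (c \<cdot>\<^sub>m J) = c \<cdot>\<^sub>m (J * J)" using mult_smult_distrib[OF Jc Jc] by simp
    also have "\<dots> = J" unfolding JJ using Jc cn by (intro eq_matI) auto
    finally show ?thesis .
  qed
  have cJJ: "(c \<cdot>\<^sub>m J) * J = J"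
  proof -
    have "(c \<cdot>\<^sub>m J) * J = c \<cdot>\<^sub>m (J * J)" using mult_smult_assoc_mat[OF Jc Jc] by simp
    also have "\<dots> = J" unfolding JJ using Jc cn by (intro eq_matI) auto
    finally show ?thesis .
  qed
  have MJ: "(L + c \<cdot>\<^sub>m J) * J = J"
    using add_mult_distrib_mat[OF Lc cJc Jc] LJ cJJ Jc by simp
  have JM: "J * (L + c \<cdot>\<^sub>m J) = J"
    using mult_add_distrib_mat[OF Jc Lc cJc] JL JJc Jc by simp
  have MiJ: "Mi * J = J"
  proof -
    have "Mi * J = Mi * ((L + c \<cdot>\<^sub>m J) * J)" using MJ by simp
    also have "\<dots> = (Mi * (L + c \<cdot>\<^sub>m J)) * J" using assoc_mult_mat[OF Mc Mc' Jc] by simp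
    also have "\<dots> = J" using MiM Jc by simp
    finally show ?thesis .
  qed
  have JMi: "J * Mi = J"
  proof -
    have "J * Mi = (J * (L + c \<cdot>\<^sub>m J)) * Mi" using JM by simp
    also have "\<dots> = J * ((L + c \<cdot>\<^sub>m J) * Mi)" using assoc_mult_mat[OF Jc Mc' Mc] by simp
    also have "\<dots> = J" using MMi Jc by simp
    finally show ?thesis .
  qed
  define P where "P = 1\<^sub>m n - c \<cdot>\<^sub>m J"
  have Pc: "P \<in> carrier_mat n n" unfolding P_def using Jc by (intro minus_carrier_mat) simp
  define X where "X = Mi - c \<cdot>\<^sub>m J"
  have Xc: "X \<in> carrier_mat n n" unfolding X_def using Jc Mc by (intro minus_carrier_mat) simp
  have MiL: "Mi * L = P"
  proof -
    have "Mi * L + Mi * (c \<cdot>\<^sub>m J) = 1\<^sub>m n"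
      using mult_add_distrib_mat[OF Mc Lc cJc] MiM by simp
    moreover have "Mi * (c \<cdot>\<^sub>m J) = c \<cdot>\<^sub>m J"
      using mult_smult_distrib[OF Mc Jc] MiJ by simp
    ultimately have h: "Mi * L + c \<cdot>\<^sub>m J = 1\<^sub>m n" by simp
    have "Mi * L \<in> carrier_mat n n" using Mc Lc by simp
    then show ?thesis unfolding P_def
    proof (intro eq_matI)
      fix i j assume ij: "i < dim_row (1\<^sub>m n - c \<cdot>\<^sub>m J)" "j < dim_col (1\<^sub>m n - c \<cdot>\<^sub>m J)"
      have "(Mi * L + c \<cdot>\<^sub>m J) $$ (i, j) = 1\<^sub>m n $$ (i, j)" using h by simp
      then show "(Mi * L) $$ (i, j) = (1\<^sub>m n - c \<cdot>\<^sub>m J) $$ (i, j)"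
        using ij Mc Lc Jc by auto
    qed (use Mc Lc Jc in auto)
  qed
  have LMi: "L * Mi = P"
  proof -
    have "L * Mi + (c \<cdot>\<^sub>m J) * Mi = 1\<^sub>m n"
      using add_mult_distrib_mat[OF Lc cJc Mc] MMi by simp
    moreover have "(c \<cdot>\<^sub>m J) * Mi = c \<cdot>\<^sub>m J"
      using mult_smult_assoc_mat[OF Jc Mc] JMi by simp
    ultimately have h: "L * Mi + c \<cdot>\<^sub>m J = 1\<^sub>m n" by simp
    have "L * Mi \<in> carrier_mat n n" using Mc Lc by simp
    then show ?thesis unfolding P_def
    proof (intro eq_matI)
      fix i j assume ij: "i < dim_row (1\<^sub>m n - c \<cdot>\<^sub>m J)" "j < dim_col (1\<^sub>m n - c \<cdot>\<^sub>m J)"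
      have "(L * Mi + c \<cdot>\<^sub>m J) $$ (i, j) = 1\<^sub>m n $$ (i, j)" using h by simp
      then show "(L * Mi) $$ (i, j) = (1\<^sub>m n - c \<cdot>\<^sub>m J) $$ (i, j)"
        using ij Mc Lc Jc by auto
    qed (use Mc Lc Jc in auto)
  qed
  have XL: "X * L = P"
  proof -
    have "X * L = Mi * L - (c \<cdot>\<^sub>m J) * L"
      unfolding X_def using minus_mult_distrib_mat[OF Mc cJc Lc] .
    also have "(c \<cdot>\<^sub>m J) * L = 0\<^sub>m n n"
      using mult_smult_assoc_mat[OF Jc Lc] JL by simp
    finally show ?thesis using MiL Pc by simp
  qed
  have LX: "L * X = P"
  proof -
    have "L * X = L * Mi - L * (c \<cdot>\<^sub>m J)"
      unfolding X_def using mult_minus_distrib_mat[OF Lc Mc cJc] .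
    also have "L * (c \<cdot>\<^sub>m J) = 0\<^sub>m n n"
      using mult_smult_distrib[OF Lc Jc] LJ by simp
    finally show ?thesis using LMi Pc by simp
  qed
  have Jij: "J $$ (i, j) = J $$ (j, i)" if "i < n" "j < n" for i j
  proof -
    have "transpose_mat J $$ (i, j) = J $$ (j, i)" using that Jc by simp
    then show ?thesis using JT by simp
  qed
  have PT: "transpose_mat P = P"
    unfolding P_def using Jc Jij by (intro eq_matI) auto
  have PL: "P * L = L"
  proof -
    have "P * L = 1\<^sub>m n * L - (c \<cdot>\<^sub>m J) * L"
      unfolding P_def using minus_mult_distrib_mat[OF one_carrier_mat cJc Lc] .
    also have "(c \<cdot>\<^sub>m J) * L = 0\<^sub>m n n"
      using mult_smult_assoc_mat[OF Jc Lc] JL by simp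
    finally show ?thesis using Lc by simp
  qed
  have JX: "J * X = 0\<^sub>m n n"
  proof -
    have "J * X = J * Mi - J * (c \<cdot>\<^sub>m J)"
      unfolding X_def using mult_minus_distrib_mat[OF Jc Mc cJc] .
    then show ?thesis using JMi JJc Jc by simp
  qed
  have PX: "P * X = X"
  proof -
    have "P * X = 1\<^sub>m n * X - (c \<cdot>\<^sub>m J) * X"
      unfolding P_def using minus_mult_distrib_mat[OF one_carrier_mat cJc Xc] .
    also have "(c \<cdot>\<^sub>m J) * X = 0\<^sub>m n n"
      using mult_smult_assoc_mat[OF Jc Xc] JX by simp
    finally show ?thesis using Xc by simp
  qed
  show "is_pinv L (Mi - c \<cdot>\<^sub>m J)"
    unfolding is_pinv_def X_def[symmetric]
    using Xc Lc LX XL PL PX PT by simp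
  show "(Mi - c \<cdot>\<^sub>m J) * L = 1\<^sub>m n - c \<cdot>\<^sub>m J"
    using XL unfolding X_def P_def .
qed




lemma pinv_unique:
  fixes A X Y :: "real mat"
  assumes Ac: "A \<in> carrier_mat r c" and PX: "is_pinv A X" and PY: "is_pinv A Y"
  shows "X = Y"
proof -
  have Xc: "X \<in> carrier_mat c r" and Yc: "Y \<in> carrier_mat c r"
    using PX PY Ac unfolding is_pinv_def by auto
  have AXA: "A * X * A = A" and XAX: "X * A * X = X" and AXT: "transpose_mat (A * X) = A * X"
    and XAT: "transpose_mat (X * A) = X * A" using PX unfolding is_pinv_def by auto
  have AYA: "A * Y * A = A" and YAY: "Y * A * Y = Y" and AYT: "transpose_mat (A * Y) = A * Y"
    and YAT: "transpose_mat (Y * A) = Y * A" using PY unfolding is_pinv_def by auto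
  have AXc: "A * X \<in> carrier_mat r r" and AYc: "A * Y \<in> carrier_mat r r"
    and XAc: "X * A \<in> carrier_mat c c" and YAc: "Y * A \<in> carrier_mat c c"
    using Ac Xc Yc by auto
  have ATc: "transpose_mat A \<in> carrier_mat c r" and XTc: "transpose_mat X \<in> carrier_mat r c"
    using Ac Xc by auto
  have s1: "transpose_mat A = transpose_mat A * (A * Y)"
  proof -
    have "transpose_mat A = transpose_mat ((A * Y) * A)" using AYA by simp
    also have "\<dots> = transpose_mat A * transpose_mat (A * Y)"
      by (rule transpose_mult[OF AYc Ac])
    finally show ?thesis using AYT by simp
  qed
  have s2: "A * X = A * Y"
  proof -
    have "A * X = transpose_mat X * transpose_mat A"
      using AXT transpose_mult[OF Ac Xc] by simp
    also have "\<dots> = transpose_mat X * (transpose_mat A * (A * Y))" using s1 by simp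
    also have "\<dots> = (transpose_mat X * transpose_mat A) * (A * Y)"
      using assoc_mult_mat[OF XTc ATc AYc] by simp
    also have "transpose_mat X * transpose_mat A = A * X"
      using AXT transpose_mult[OF Ac Xc] by simp
    also have "(A * X) * (A * Y) = ((A * X) * A) * Y"
      using assoc_mult_mat[OF AXc Ac Yc] by simp
    also have "\<dots> = A * Y" using AXA by simp
    finally show ?thesis .
  qed
  have s3: "transpose_mat A = (Y * A) * transpose_mat A"
  proof -
    have "transpose_mat A = transpose_mat (A * (Y * A))"
      using AYA assoc_mult_mat[OF Ac Yc Ac] by simp
    also have "\<dots> = transpose_mat (Y * A) * transpose_mat A"
      by (rule transpose_mult[OF Ac YAc])
    finally show ?thesis using YAT by simp
  qed
  have s4: "X * A = Y * A"
  proof -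
    have "X * A = transpose_mat A * transpose_mat X"
      using XAT transpose_mult[OF Xc Ac] by simp
    also have "\<dots> = ((Y * A) * transpose_mat A) * transpose_mat X" using s3 by simp
    also have "\<dots> = (Y * A) * (transpose_mat A * transpose_mat X)"
      using assoc_mult_mat[OF YAc ATc XTc] by simp
    also have "transpose_mat A * transpose_mat X = X * A"
      using XAT transpose_mult[OF Xc Ac] by simp
    also have "(Y * A) * (X * A) = Y * ((A * X) * A)"
      using assoc_mult_mat[OF YAc Xc Ac] assoc_mult_mat[OF Yc Ac XAc] assoc_mult_mat[OF Ac Xc Ac] by simp
    also have "\<dots> = Y * A" using AXA by simp
    finally show ?thesis .
  qed
  have "X = X * (A * X)" using XAX assoc_mult_mat[OF Xc Ac Xc] by simp
  also have "\<dots> = X * (A * Y)" using s2 by simp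
  also have "\<dots> = (X * A) * Y" using assoc_mult_mat[OF Xc Ac Yc] by simp
  also have "\<dots> = (Y * A) * Y" using s4 by simp
  also have "\<dots> = Y" using YAY by simp
  finally show ?thesis .
qed

lemma pinv_eq: "A \<in> carrier_mat r c \<Longrightarrow> is_pinv A X \<Longrightarrow> pinv A = X"
  unfolding pinv_def by (rule the_equality) (auto intro: pinv_unique)




definition Jm :: "nat \<Rightarrow> real mat" where "Jm n = mat n n (\<lambda>_. 1)"

lemma Jm_dims[simp]: "dim_row (Jm n) = n" "dim_col (Jm n) = n" by (simp_all add: Jm_def)
lemma Jm_carrier[simp]: "Jm n \<in> carrier_mat n n" by (rule carrier_matI) simp_all
lemma Jm_index[simp]: "i < n \<Longrightarrow> j < n \<Longrightarrow> Jm n $$ (i, j) = 1" by (simp add: Jm_def)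
lemma row_Jm[simp]: "i < n \<Longrightarrow> row (Jm n) i = onev n" by (simp add: Jm_def onev_def)
lemma col_Jm[simp]: "j < n \<Longrightarrow> col (Jm n) j = onev n" by (simp add: Jm_def onev_def)

lemma onev_index[simp]: "i < n \<Longrightarrow> onev n $ i = 1" "dim_vec (onev n) = n"
  by (simp_all add: onev_def)

lemma onev_scalar: "x \<in> carrier_vec n \<Longrightarrow> onev n \<bullet> x = (\<Sum>i<n. x $ i)"
  unfolding scalar_prod_def by (simp add: atLeast0LessThan)

lemma row_L_onev:
  assumes sg: "simple_graph_edges n Es" and i: "i < n"
  shows "row (laplacian n Es) i \<bullet> onev n = 0"
proof -
  have "(laplacian n Es *\<^sub>v onev n) $ i = 0" using L_one[OF sg] i by simp
  then show ?thesis using i by simp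
qed

lemma LJ: "simple_graph_edges n Es \<Longrightarrow> laplacian n Es * Jm n = 0\<^sub>m n n"
  by (intro eq_matI) (auto simp: row_L_onev)

lemma col_L: "j < n \<Longrightarrow> col (laplacian n Es) j = row (laplacian n Es) j"
proof -
  assume j: "j < n"
  have "col (laplacian n Es) j = row (transpose_mat (laplacian n Es)) j" using j by simp
  then show ?thesis using laplacian_sym by metis
qed

lemma JL: "simple_graph_edges n Es \<Longrightarrow> Jm n * laplacian n Es = 0\<^sub>m n n"
proof (intro eq_matI)
  fix i j assume sg: "simple_graph_edges n Es" and ij: "i < dim_row (0\<^sub>m n n :: real mat)" "j < dim_col (0\<^sub>m n n :: real mat)"
  have "(Jm n * laplacian n Es) $$ (i, j) = onev n \<bullet> row (laplacian n Es) j"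
    using ij by (simp add: col_L)
  also have "\<dots> = row (laplacian n Es) j \<bullet> onev n"
    by (rule comm_scalar_prod[of _ n]) (use ij in \<open>auto intro!: carrier_vecI\<close>)
  also have "\<dots> = 0" using row_L_onev[OF sg] ij by simp
  finally show "(Jm n * laplacian n Es) $$ (i, j) = 0\<^sub>m n n $$ (i, j)" using ij by simp
qed auto

lemma JJ: "Jm n * Jm n = real n \<cdot>\<^sub>m Jm n"
proof (intro eq_matI)
  fix i j assume ij: "i < dim_row (real n \<cdot>\<^sub>m Jm n)" "j < dim_col (real n \<cdot>\<^sub>m Jm n)"
  have "(Jm n * Jm n) $$ (i, j) = onev n \<bullet> onev n" using ij by simp
  also have "\<dots> = real n" by (subst onev_scalar) (auto intro!: carrier_vecI)
  finally show "(Jm n * Jm n) $$ (i, j) = (real n \<cdot>\<^sub>m Jm n) $$ (i, j)" using ij by simp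
qed auto

lemma JT: "transpose_mat (Jm n) = Jm n"
  by (intro eq_matI) auto

lemma M_inj:
  assumes sg: "simple_graph_edges n Es" and cg: "connected_graph n Es" and n: "n > 0"
    and x: "x \<in> carrier_vec n"
    and Mx: "(laplacian n Es + (1 / real n) \<cdot>\<^sub>m Jm n) *\<^sub>v x = 0\<^sub>v n"
  shows "x = 0\<^sub>v n"
proof -
  define c where "c = 1 / real n"
  define s where "s = (\<Sum>i<n. x $ i)"
  have Mx': "(laplacian n Es + c \<cdot>\<^sub>m Jm n) *\<^sub>v x = 0\<^sub>v n" using Mx c_def by simp
  have ent: "(laplacian n Es *\<^sub>v x) $ i + c * s = 0" if i: "i < n" for i
  proof -
    have "((laplacian n Es + c \<cdot>\<^sub>m Jm n) *\<^sub>v x) $ i = 0" using Mx' i by simp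
    moreover have "((laplacian n Es + c \<cdot>\<^sub>m Jm n) *\<^sub>v x) $ i
       = (laplacian n Es *\<^sub>v x) $ i + ((c \<cdot>\<^sub>m Jm n) *\<^sub>v x) $ i"
      using add_mult_distrib_mat_vec[OF laplacian_carrier smult_carrier_mat[OF Jm_carrier] x] i x
      by simp
    moreover have "((c \<cdot>\<^sub>m Jm n) *\<^sub>v x) $ i = c * s"
      using i x by (simp add: s_def onev_scalar)
    ultimately show ?thesis by simp
  qed
  have Lxc: "laplacian n Es *\<^sub>v x \<in> carrier_vec n" by (intro carrier_vecI) simp
  have "onev n \<bullet> (laplacian n Es *\<^sub>v x) = (transpose_mat (laplacian n Es) *\<^sub>v onev n) \<bullet> x"
    using transpose_vec_mult_scalar[OF laplacian_carrier x onev_carrier] by simp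
  also have "\<dots> = 0" using L_one[OF sg] laplacian_sym x by simp
  finally have "onev n \<bullet> (laplacian n Es *\<^sub>v x) = 0" .
  moreover have "onev n \<bullet> (laplacian n Es *\<^sub>v x) = (\<Sum>i<n. - (c * s))"
  proof -
    have "onev n \<bullet> (laplacian n Es *\<^sub>v x) = (\<Sum>i<n. (laplacian n Es *\<^sub>v x) $ i)"
      by (rule onev_scalar[OF Lxc])
    also have "\<dots> = (\<Sum>i<n. - (c * s))"
    proof (rule sum.cong)
      fix i assume "i \<in> {..<n}"
      then have "(laplacian n Es *\<^sub>v x) $ i + c * s = 0" using ent by simp
      then show "(laplacian n Es *\<^sub>v x) $ i = - (c * s)" by linarith
    qed simp
    finally show ?thesis .
  qed
  ultimately have "real n * (c * s) = 0" by simp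
  then have s0: "s = 0" using n unfolding c_def by simp
  have Lx0: "laplacian n Es *\<^sub>v x = 0\<^sub>v n"
    using ent s0 by (intro eq_vecI) auto
  have const: "x $ i = x $ 0" if "i < n" for i
    using L_ker_const[OF sg cg x Lx0 that n] .
  have "s = (\<Sum>i<n. x $ 0)" unfolding s_def
    by (rule sum.cong[OF refl]) (rule const, simp)
  then have "s = real n * x $ 0" by simp
  then have x0: "x $ 0 = 0" using s0 n by simp
  show ?thesis
  proof (intro eq_vecI)
    fix i assume "i < dim_vec (0\<^sub>v n :: real vec)"
    then have i: "i < n" by simp
    show "x $ i = 0\<^sub>v n $ i" using const[OF i] x0 i by simp
  qed (use x in simp)
qed

lemma exists_Minv:
  assumes sg: "simple_graph_edges n Es" and cg: "connected_graph n Es" and n: "n > 0"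
  shows "\<exists>Mi \<in> carrier_mat n n. Mi * (laplacian n Es + (1 / real n) \<cdot>\<^sub>m Jm n) = 1\<^sub>m n \<and>
      (laplacian n Es + (1 / real n) \<cdot>\<^sub>m Jm n) * Mi = 1\<^sub>m n"
proof -
  let ?M = "laplacian n Es + (1 / real n) \<cdot>\<^sub>m Jm n"
  have Mc: "?M \<in> carrier_mat n n" by simp
  have "det ?M \<noteq> 0"
    using det_0_iff_vec_prod_zero[OF Mc] M_inj[OF sg cg n] by blast
  from det_non_zero_imp_unit[OF Mc this, of "()"]
  have "?M \<in> Units (ring_mat TYPE(real) n ())" .
  then show ?thesis unfolding Units_def ring_mat_def by auto
qed

lemma pinv_L_carrier:
  assumes sg: "simple_graph_edges n Es" and cg: "connected_graph n Es" and n: "n > 0"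
  shows "pinv (laplacian n Es) \<in> carrier_mat n n"
proof -
  obtain Mi where Mc: "Mi \<in> carrier_mat n n"
    and MiM: "Mi * (laplacian n Es + (1 / real n) \<cdot>\<^sub>m Jm n) = 1\<^sub>m n"
    and MMi: "(laplacian n Es + (1 / real n) \<cdot>\<^sub>m Jm n) * Mi = 1\<^sub>m n"
    using exists_Minv[OF sg cg n] by blast
  note pc = pinv_construct[OF laplacian_carrier Jm_carrier Mc n LJ[OF sg] JL[OF sg] JJ MiM MMi laplacian_sym JT]
  have P: "pinv (laplacian n Es) = Mi - (1 / real n) \<cdot>\<^sub>m Jm n"
    by (rule pinv_eq[OF laplacian_carrier pc(1)])
  show ?thesis unfolding P by (intro minus_carrier_mat) simp
qed

lemma pinv_L_apply:
  assumes sg: "simple_graph_edges n Es" and cg: "connected_graph n Es" and n: "n > 0"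
    and x: "x \<in> carrier_vec n" and s: "(\<Sum>i<n. x $ i) = 0"
  shows "pinv (laplacian n Es) *\<^sub>v (laplacian n Es *\<^sub>v x) = x"
proof -
  obtain Mi where Mc: "Mi \<in> carrier_mat n n"
    and MiM: "Mi * (laplacian n Es + (1 / real n) \<cdot>\<^sub>m Jm n) = 1\<^sub>m n"
    and MMi: "(laplacian n Es + (1 / real n) \<cdot>\<^sub>m Jm n) * Mi = 1\<^sub>m n"
    using exists_Minv[OF sg cg n] by blast
  note pc = pinv_construct[OF laplacian_carrier Jm_carrier Mc n LJ[OF sg] JL[OF sg] JJ MiM MMi laplacian_sym JT]
  have P: "pinv (laplacian n Es) = Mi - (1 / real n) \<cdot>\<^sub>m Jm n"
    by (rule pinv_eq[OF laplacian_carrier pc(1)])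
  have Pc: "pinv (laplacian n Es) \<in> carrier_mat n n" unfolding P by (intro minus_carrier_mat) simp
  have "pinv (laplacian n Es) *\<^sub>v (laplacian n Es *\<^sub>v x) = (pinv (laplacian n Es) * laplacian n Es) *\<^sub>v x"
    using assoc_mult_mat_vec[OF Pc laplacian_carrier x] by simp
  also have "\<dots> = (1\<^sub>m n - (1 / real n) \<cdot>\<^sub>m Jm n) *\<^sub>v x" using pc(2) P by simp
  also have "\<dots> = x"
  proof (intro eq_vecI)
    fix i assume i: "i < dim_vec x"
    then have i': "i < n" using x by simp
    have "((1\<^sub>m n - (1 / real n) \<cdot>\<^sub>m Jm n) *\<^sub>v x) $ i = (1\<^sub>m n *\<^sub>v x) $ i - (((1 / real n) \<cdot>\<^sub>m Jm n) *\<^sub>v x) $ i"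
      using minus_mult_distrib_mat_vec[OF one_carrier_mat smult_carrier_mat[OF Jm_carrier] x] i' by simp
    also have "(((1 / real n) \<cdot>\<^sub>m Jm n) *\<^sub>v x) $ i = 0"
      using i' x s by (simp add: onev_scalar)
    finally show "((1\<^sub>m n - (1 / real n) \<cdot>\<^sub>m Jm n) *\<^sub>v x) $ i = x $ i" using i' x by simp
  qed (use x in simp)
  finally show ?thesis .
qed




lemma exp_quad: fixes x :: real assumes "\<bar>x\<bar> \<le> 1" shows "exp x \<le> 1 + x + x\<^sup>2"
proof (cases "x \<ge> 0")
  case True then show ?thesis using exp_bound[of x] assms by simp
next
  case False
  define y where "y = - x"
  have y: "0 < y" "y \<le> 1" using False assms unfolding y_def by auto
  have "exp x = 1 / exp y" unfolding y_def by (simp add: exp_minus field_simps)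
  also have "\<dots> \<le> 1 / (1 + y)"
    using y exp_ge_add_one_self[of y] by (intro divide_left_mono) auto
  also have "\<dots> \<le> 1 - y + y\<^sup>2"
  proof -
    have "1 \<le> (1 - y + y\<^sup>2) * (1 + y)" using y by (simp add: algebra_simps power2_eq_square power3_eq_cube)
    then show ?thesis using y by (simp add: field_simps)
  qed
  also have "\<dots> = 1 + x + x\<^sup>2" unfolding y_def by simp
  finally show ?thesis .
qed

lemma coin_bound:
  fixes p l :: real
  assumes p: "0 \<le> p" "p \<le> 1" and l: "\<bar>l\<bar> \<le> 1"
  shows "p * exp (l * (1 - p)) + (1 - p) * exp (- (l * p)) \<le> 1 + l\<^sup>2 * (p * (1 - p))"
proof -
  have a: "\<bar>l * (1 - p)\<bar> \<le> 1" using p l by (simp add: abs_mult mult_le_one)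
  have b: "\<bar>- (l * p)\<bar> \<le> 1" using p l by (simp add: abs_mult mult_le_one)
  have "p * exp (l * (1 - p)) \<le> p * (1 + l * (1 - p) + (l * (1 - p))\<^sup>2)"
    using exp_quad[OF a] p by (intro mult_left_mono) auto
  moreover have "(1 - p) * exp (- (l * p)) \<le> (1 - p) * (1 + - (l * p) + (- (l * p))\<^sup>2)"
    using exp_quad[OF b] p by (intro mult_left_mono) auto
  moreover have "p * (1 + l * (1 - p) + (l * (1 - p))\<^sup>2) + (1 - p) * (1 + - (l * p) + (- (l * p))\<^sup>2)
      = 1 + l\<^sup>2 * (p * (1 - p))"
    by (simp add: algebra_simps power2_eq_square)
  ultimately show ?thesis by linarith
qed

lemma binom_mgf:
  fixes p l :: real
  assumes p: "0 \<le> p" "p \<le> 1"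
  shows "(\<Sum>x\<le>k. pmf (binomial_pmf k p) x * exp (l * (real x - real k * p)))
       = (p * exp (l * (1 - p)) + (1 - p) * exp (- (l * p))) ^ k"
proof -
  have "(\<Sum>x\<le>k. pmf (binomial_pmf k p) x * exp (l * (real x - real k * p)))
      = (\<Sum>x\<le>k. exp (- (l * p)) ^ k * (of_nat (k choose x) * (p * exp l) ^ x * (1 - p) ^ (k - x)))"
  proof (rule sum.cong[OF refl])
    fix x assume "x \<in> {..k}"
    have e: "exp (l * (real x - real k * p)) = exp l ^ x * exp (- (l * p)) ^ k"
      by (simp add: exp_of_nat_mult[symmetric] exp_add[symmetric] algebra_simps)
    show "pmf (binomial_pmf k p) x * exp (l * (real x - real k * p))
        = exp (- (l * p)) ^ k * (of_nat (k choose x) * (p * exp l) ^ x * (1 - p) ^ (k - x))"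
      unfolding e using p by (simp add: power_mult_distrib)
  qed
  also have "\<dots> = exp (- (l * p)) ^ k * (p * exp l + (1 - p)) ^ k"
    by (simp add: binomial_ring sum_distrib_left)
  also have "\<dots> = (p * exp (l * (1 - p)) + (1 - p) * exp (- (l * p))) ^ k"
  proof -
    have "exp (- (l * p)) * (p * exp l + (1 - p)) = p * exp (l * (1 - p)) + (1 - p) * exp (- (l * p))"
      by (simp add: algebra_simps exp_add[symmetric] exp_diff)
    then show ?thesis by (simp add: power_mult_distrib[symmetric])
  qed
  finally show ?thesis .
qed

lemma mgf_bound:
  fixes p l :: real
  assumes p: "0 \<le> p" "p \<le> 1" and l: "\<bar>l\<bar> \<le> 1"
  shows "(\<Sum>x\<le>k. pmf (binomial_pmf k p) x * exp (l * (real x - real k * p)))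
       \<le> exp (real k * l\<^sup>2 * (p * (1 - p)))"
proof -
  have "(p * exp (l * (1 - p)) + (1 - p) * exp (- (l * p))) ^ k \<le> (1 + l\<^sup>2 * (p * (1 - p))) ^ k"
    using coin_bound[OF p l] p by (intro power_mono) auto
  also have "\<dots> \<le> exp (l\<^sup>2 * (p * (1 - p))) ^ k"
    using p by (intro power_mono) auto
  also have "\<dots> = exp (real k * l\<^sup>2 * (p * (1 - p)))"
    by (simp add: exp_of_nat_mult[symmetric] mult.assoc)
  finally show ?thesis using binom_mgf[OF p] by simp
qed

lemma set_pmf_binomial_le:
  fixes p :: real assumes p: "0 \<le> p" "p \<le> 1"
  shows "set_pmf (binomial_pmf k p) \<subseteq> {..k}"
  using set_pmf_binomial_eq[OF p, of k] by auto

lemma tail_gen: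
  fixes p l t :: real and S :: "nat set"
  assumes p: "0 \<le> p" "p \<le> 1" and l: "\<bar>l\<bar> \<le> 1"
    and S: "\<And>x. x \<in> S \<Longrightarrow> l * (real x - real k * p) - t \<ge> 0"
  shows "measure_pmf.prob (binomial_pmf k p) S \<le> exp (- t + real k * l\<^sup>2 * (p * (1 - p)))"
proof -
  let ?M = "binomial_pmf k p"
  let ?T = "S \<inter> set_pmf ?M"
  have fin: "finite ?T" using set_pmf_binomial_le[OF p, of k] finite_subset by blast
  have "measure_pmf.prob ?M S = measure_pmf.prob ?M ?T" by (simp add: measure_Int_set_pmf)
  also have "\<dots> = (\<Sum>x\<in>?T. pmf ?M x)" by (rule measure_measure_pmf_finite[OF fin])
  also have "\<dots> \<le> (\<Sum>x\<in>?T. pmf ?M x * exp (l * (real x - real k * p) - t))"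
  proof (rule sum_mono)
    fix x assume "x \<in> ?T"
    then have "exp (l * (real x - real k * p) - t) \<ge> 1" using S by simp
    then show "pmf ?M x \<le> pmf ?M x * exp (l * (real x - real k * p) - t)"
      using pmf_nonneg[of ?M x] by (simp add: mult_le_cancel_left1)
  qed
  also have "\<dots> \<le> (\<Sum>x\<le>k. pmf ?M x * exp (l * (real x - real k * p) - t))"
    using set_pmf_binomial_le[OF p, of k] by (intro sum_mono2) auto
  also have "\<dots> = exp (- t) * (\<Sum>x\<le>k. pmf ?M x * exp (l * (real x - real k * p)))"
    unfolding sum_distrib_left
  proof (rule sum.cong[OF refl])
    fix x assume "x \<in> {..k}"
    have "exp (l * (real x - real k * p) - t) = exp (- t) * exp (l * (real x - real k * p))"
      by (simp add: exp_add[symmetric])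
    then show "pmf ?M x * exp (l * (real x - real k * p) - t) = exp (- t) * (pmf ?M x * exp (l * (real x - real k * p)))"
      by simp
  qed
  also have "\<dots> \<le> exp (- t) * exp (real k * l\<^sup>2 * (p * (1 - p)))"
    by (intro mult_left_mono mgf_bound[OF p l]) auto
  also have "\<dots> = exp (- t + real k * l\<^sup>2 * (p * (1 - p)))" by (simp only: exp_add)
  finally show ?thesis .
qed

lemma chernoff_binomial:
  fixes p a :: real and k :: nat
  assumes p: "0 \<le> p" "p \<le> 1" and s: "p * (1 - p) > 0" and k: "k > 0"
    and a: "0 \<le> a" "a \<le> 2 * real k * (p * (1 - p))"
  shows "measure_pmf.prob (binomial_pmf k p) {x. \<bar>real x - real k * p\<bar> \<ge> a}
     \<le> 2 * exp (- (a\<^sup>2 / (4 * real k * (p * (1 - p)))))"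
proof -
  define v where "v = p * (1 - p)"
  have v: "v > 0" using s v_def by simp
  define l where "l = a / (2 * real k * v)"
  have l0: "0 \<le> l" unfolding l_def using a v k by simp
  have a2: "a \<le> 2 * real k * v" using a(2) v_def by simp
  have l1: "l \<le> 1" unfolding l_def using a2 v k by (simp add: pos_divide_le_eq)
  have labs: "\<bar>l\<bar> \<le> 1" "\<bar>- l\<bar> \<le> 1" using l0 l1 by auto
  have ex: "- (l * a) + real k * l\<^sup>2 * v = - (a\<^sup>2 / (4 * real k * v))"
    unfolding l_def using v k by (simp add: field_simps power2_eq_square)
  let ?M = "binomial_pmf k p"
  have up: "measure_pmf.prob ?M {x. real x - real k * p \<ge> a} \<le> exp (- (a\<^sup>2 / (4 * real k * v)))"
  proof -
    have "measure_pmf.prob ?M {x. real x - real k * p \<ge> a} \<le> exp (- (l * a) + real k * l\<^sup>2 * v)"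
      unfolding v_def
    proof (rule tail_gen[OF p labs(1)])
      fix x assume "x \<in> {x. real x - real k * p \<ge> a}"
      then show "l * (real x - real k * p) - l * a \<ge> 0"
        using l0 by (simp add: right_diff_distrib[symmetric] mult_nonneg_nonneg)
    qed
    then show ?thesis using ex by simp
  qed
  have lo: "measure_pmf.prob ?M {x. real x - real k * p \<le> - a} \<le> exp (- (a\<^sup>2 / (4 * real k * v)))"
  proof -
    have "measure_pmf.prob ?M {x. real x - real k * p \<le> - a} \<le> exp (- (l * a) + real k * (- l)\<^sup>2 * v)"
      unfolding v_def
    proof (rule tail_gen[OF p labs(2)])
      fix x assume "x \<in> {x. real x - real k * p \<le> - a}"
      then have "0 \<le> l * (- a - (real x - real k * p))" using l0 by (intro mult_nonneg_nonneg) auto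
      then show "- l * (real x - real k * p) - l * a \<ge> 0" by (simp add: algebra_simps)
    qed
    then show ?thesis using ex by simp
  qed
  have "{x. \<bar>real x - real k * p\<bar> \<ge> a} \<subseteq> {x. real x - real k * p \<ge> a} \<union> {x. real x - real k * p \<le> - a}"
    by auto
  then have "measure_pmf.prob ?M {x. \<bar>real x - real k * p\<bar> \<ge> a}
      \<le> measure_pmf.prob ?M ({x. real x - real k * p \<ge> a} \<union> {x. real x - real k * p \<le> - a})"
    by (intro measure_pmf.finite_measure_mono) auto
  also have "\<dots> \<le> measure_pmf.prob ?M {x. real x - real k * p \<ge> a} + measure_pmf.prob ?M {x. real x - real k * p \<le> - a}"
    by (intro measure_subadditive) (simp_all add: measure_pmf.emeasure_finite)
  finally show ?thesis using up lo unfolding v_def by simp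
qed




lemma delta_bound:
  fixes p q s b kk C d F :: real
  assumes p: "p > 0" and q: "q > 0" and pq: "p + q = 1" and s: "s = p * q"
    and sb: "s \<ge> 1 / (4 * b)" and b: "b > 0" and kk: "kk > 0" and C: "C \<ge> 0"
    and kC: "kk \<ge> 64 * b * C" and d: "d\<^sup>2 \<le> 4 * s * C / kk" and F: "F = p + d"
  shows "F > 0" "1 - F > 0"
    "\<bar>ln (F / (1 - F)) - ln (p / q) - (1 / (p * q)) * d\<bar> \<le> 64 * b * C / kk"
proof -
  have s0: "s > 0" using s p q by simp
  have sp: "s \<le> p" using s p q pq by (simp add: mult_le_cancel_left1)
  have sq: "s \<le> q" using s p q pq by (simp add: mult_le_cancel_right1)
  have "C \<le> kk / (64 * b)" using kC b by (simp add: field_simps)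
  also have "kk / (64 * b) = kk * (1 / (4 * b)) / 16" by (simp add: field_simps)
  also have "\<dots> \<le> kk * s / 16" using sb kk by (intro divide_right_mono mult_left_mono) auto
  finally have Ck: "C / kk \<le> s / 16" using kk by (simp add: field_simps)
  have "d\<^sup>2 \<le> 4 * s * (C / kk)" using d by simp
  also have "\<dots> \<le> 4 * s * (s / 16)" using Ck s0 by (intro mult_left_mono) auto
  also have "\<dots> = (s / 2)\<^sup>2" by (simp add: power2_eq_square)
  finally have "d\<^sup>2 \<le> (s / 2)\<^sup>2" .
  then have hd: "\<bar>d\<bar> \<le> s / 2" using s0 by (simp add: abs_le_square_iff[symmetric])
  define u where "u = d / p"
  define u' where "u' = - d / q"
  have hu: "\<bar>u\<bar> \<le> 1 / 2"
  proof -
    have "\<bar>u\<bar> = \<bar>d\<bar> / p" unfolding u_def using p by simp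
    also have "\<dots> \<le> (s / 2) / p" using hd p by (intro divide_right_mono) auto
    also have "\<dots> \<le> 1 / 2" using sp p by (simp add: field_simps)
    finally show ?thesis .
  qed
  have hu': "\<bar>u'\<bar> \<le> 1 / 2"
  proof -
    have "\<bar>u'\<bar> = \<bar>d\<bar> / q" unfolding u'_def using q by simp
    also have "\<dots> \<le> (s / 2) / q" using hd q by (intro divide_right_mono) auto
    also have "\<dots> \<le> 1 / 2" using sq q by (simp add: field_simps)
    finally show ?thesis .
  qed
  have F1: "F = p * (1 + u)" unfolding F u_def using p by (simp add: field_simps)
  have F2: "1 - F = q * (1 + u')"
  proof -
    have "q * (1 + u') = q - d" unfolding u'_def using q by (simp add: field_simps)
    moreover have "1 - F = q - d" using F pq by linarith
    ultimately show ?thesis by simp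
  qed
  have pu: "1 + u > 0" and pu': "1 + u' > 0" using hu hu' by auto
  show "F > 0" unfolding F1 using p pu by simp
  show "1 - F > 0" unfolding F2 using q pu' by simp
  have lnR: "ln (F / (1 - F)) = ln p + ln (1 + u) - ln q - ln (1 + u')"
  proof -
    have "F / (1 - F) = (p * (1 + u)) / (q * (1 + u'))" using F1 F2 by simp
    then show ?thesis using p q pu pu' by (simp add: ln_div ln_mult)
  qed
  have lnr: "ln (p / q) = ln p - ln q" using p q by (simp add: ln_div)
  have vd: "(1 / (p * q)) * d = u - u'"
  proof -
    have "(1 / (p * q)) * d = (p + q) * d / (p * q)" using pq by simp
    also have "\<dots> = d / q + d / p" using p q by (simp add: field_simps)
    finally show ?thesis unfolding u_def u'_def by simp
  qed
  have "ln (F / (1 - F)) - ln (p / q) - (1 / (p * q)) * d = (ln (1 + u) - u) - (ln (1 + u') - u')"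
    unfolding lnR lnr vd by simp
  then have "\<bar>ln (F / (1 - F)) - ln (p / q) - (1 / (p * q)) * d\<bar> \<le> 2 * u\<^sup>2 + 2 * u'\<^sup>2"
    using abs_ln_one_plus_x_minus_x_bound[OF hu] abs_ln_one_plus_x_minus_x_bound[OF hu'] by linarith
  also have "\<dots> \<le> 2 * (d\<^sup>2 / s\<^sup>2) + 2 * (d\<^sup>2 / s\<^sup>2)"
  proof -
    have "u\<^sup>2 = d\<^sup>2 / p\<^sup>2" unfolding u_def by (simp add: power_divide)
    also have "\<dots> \<le> d\<^sup>2 / s\<^sup>2" using sp s0 by (intro divide_left_mono power_mono mult_pos_pos) auto
    finally have 1: "u\<^sup>2 \<le> d\<^sup>2 / s\<^sup>2" .
    have "u'\<^sup>2 = d\<^sup>2 / q\<^sup>2" unfolding u'_def by (simp add: power_divide)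
    also have "\<dots> \<le> d\<^sup>2 / s\<^sup>2" using sq s0 by (intro divide_left_mono power_mono mult_pos_pos) auto
    finally have 2: "u'\<^sup>2 \<le> d\<^sup>2 / s\<^sup>2" .
    show ?thesis using 1 2 by linarith
  qed
  also have "\<dots> = 4 * d\<^sup>2 / s\<^sup>2" by simp
  also have "\<dots> \<le> 4 * (4 * s * C / kk) / s\<^sup>2" using d s0 by (intro divide_right_mono) auto
  also have "\<dots> = 16 * C / kk * (1 / s)" using s0 by (simp add: field_simps power2_eq_square)
  also have "\<dots> \<le> 16 * C / kk * (4 * b)"
  proof (rule mult_left_mono)
    show "1 / s \<le> 4 * b" using sb s0 b by (simp add: field_simps)
    show "0 \<le> 16 * C / kk" using C kk by simp
  qed
  also have "\<dots> = 64 * b * C / kk" by simp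
  finally show "\<bar>ln (F / (1 - F)) - ln (p / q) - (1 / (p * q)) * d\<bar> \<le> 64 * b * C / kk" .
qed




lemma edge_bad_prob:
  fixes p s C :: real and k :: nat
  assumes p: "0 < p" "p < 1" and s: "s = p * (1 - p)" and k: "k > 0" and C: "C \<ge> 0"
    and Cks: "C \<le> real k * s"
  shows "measure_pmf.prob (binomial_pmf k p) {x. (real x / real k - p)\<^sup>2 > 4 * s * C / real k}
     \<le> 2 * exp (- C)"
proof -
  have s0: "s > 0" using s p by simp
  have kr: "real k > 0" using k by simp
  define a where "a = sqrt (4 * real k * s * C)"
  have a0: "a \<ge> 0" unfolding a_def using s0 C kr by simp
  have a2: "a\<^sup>2 = 4 * real k * s * C" unfolding a_def using s0 C kr by simp
  have "a\<^sup>2 \<le> (2 * real k * s)\<^sup>2"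
  proof -
    have "4 * real k * s * C \<le> 4 * real k * s * (real k * s)"
      using Cks s0 kr by (intro mult_left_mono) auto
    moreover have "(2 * real k * s)\<^sup>2 = 4 * real k * s * (real k * s)"
      by (simp add: power2_eq_square mult.commute mult.left_commute)
    ultimately show ?thesis unfolding a2 by linarith
  qed
  then have "a \<le> 2 * real k * s"
    by (rule power2_le_imp_le) (use s0 kr in simp)
  then have a_le: "a \<le> 2 * real k * (p * (1 - p))" unfolding s .
  have sub: "{x. (real x / real k - p)\<^sup>2 > 4 * s * C / real k} \<subseteq> {x. \<bar>real x - real k * p\<bar> \<ge> a}"
  proof
    fix x assume "x \<in> {x. (real x / real k - p)\<^sup>2 > 4 * s * C / real k}"
    then have h: "(real x / real k - p)\<^sup>2 > 4 * s * C / real k" by simp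
    have "(real x - real k * p)\<^sup>2 = (real k)\<^sup>2 * (real x / real k - p)\<^sup>2"
      using kr by (simp add: field_simps power2_eq_square)
    also have "\<dots> > (real k)\<^sup>2 * (4 * s * C / real k)"
      using h kr by (intro mult_strict_left_mono) auto
    also have "(real k)\<^sup>2 * (4 * s * C / real k) = a\<^sup>2"
      unfolding a2 using kr by (simp add: power2_eq_square field_simps)
    finally have "a\<^sup>2 < \<bar>real x - real k * p\<bar>\<^sup>2" by simp
    then have "a < \<bar>real x - real k * p\<bar>"
      by (rule power_less_imp_less_base) simp
    then show "x \<in> {x. \<bar>real x - real k * p\<bar> \<ge> a}" by simp
  qed
  have "measure_pmf.prob (binomial_pmf k p) {x. (real x / real k - p)\<^sup>2 > 4 * s * C / real k}
      \<le> measure_pmf.prob (binomial_pmf k p) {x. \<bar>real x - real k * p\<bar> \<ge> a}"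
    using sub by (intro measure_pmf.finite_measure_mono) auto
  also have "\<dots> \<le> 2 * exp (- (a\<^sup>2 / (4 * real k * (p * (1 - p)))))"
    using p s0 s k a0 a_le by (intro chernoff_binomial) auto
  also have "a\<^sup>2 / (4 * real k * (p * (1 - p))) = C"
    unfolding a2 s[symmetric] using s0 kr by simp
  finally show ?thesis .
qed

lemma marginal_prob:
  assumes e: "e < length Es"
  shows "measure_pmf.prob (comparisons w Es k) {X. Q (X e)}
       = measure_pmf.prob (binomial_pmf k (p_edge w Es e)) {x. Q x}"
proof -
  have "map_pmf (\<lambda>f. f e) (comparisons w Es k) = binomial_pmf k (p_edge w Es e)"
    unfolding comparisons_def using Pi_pmf_component[of "{..<length Es}" e 0] e by simp
  then have "measure_pmf.prob (binomial_pmf k (p_edge w Es e)) {x. Q x}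
      = measure_pmf.prob (map_pmf (\<lambda>f. f e) (comparisons w Es k)) {x. Q x}" by simp
  also have "\<dots> = measure_pmf.prob (comparisons w Es k) {X. Q (X e)}"
    by (simp add: vimage_def)
  finally show ?thesis by simp
qed

lemma length_le:
  assumes sg: "simple_graph_edges n Es"
  shows "length Es \<le> n * n"
proof -
  have "distinct (map (\<lambda>(i, j). {i, j}) Es)" using sg unfolding simple_graph_edges_def by blast
  then have d: "distinct Es" by (simp add: distinct_map)
  have "set Es \<subseteq> {..<n} \<times> {..<n}"
  proof
    fix x assume "x \<in> set Es"
    then obtain e where e: "e < length Es" "Es ! e = x" by (auto simp: in_set_conv_nth)
    show "x \<in> {..<n} \<times> {..<n}" using edge_bounds[OF sg e(1)] e(2) by (cases x) auto
  qed
  then have "card (set Es) \<le> card ({..<n} \<times> {..<n})" by (intro card_mono) auto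
  then show ?thesis using distinct_card[OF d] by (simp add: card_cartesian_product)
qed

lemma E_max_ge1:
  assumes sg: "simple_graph_edges n Es" and m: "length Es > 0"
  shows "E_max n Es \<ge> 1"
proof -
  obtain a c where ac: "Es ! 0 = (a, c)" by fastforce
  have ab: "a < n" "c < n" "a \<noteq> c" using edge_bounds[OF sg m] ac by auto
  have sp: "simple_path Es a c [a, c]"
    unfolding simple_path_def
  proof (intro conjI allI impI)
    fix t assume "Suc t < length [a, c]"
    then have t: "t = 0" by simp
    have "(a, c) \<in> set Es" using ac m by (metis nth_mem)
    then show "adjacent Es ([a, c] ! t) ([a, c] ! Suc t)" unfolding t adjacent_def by simp
  qed (use ab in auto)
  have ep: "edge_on_path Es 0 [a, c]"
    unfolding edge_on_path_def using ac by (intro exI[of _ 0]) auto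
  have "0 \<in> path_edges Es a c" unfolding path_edges_def using m sp ep by blast
  moreover have "finite (path_edges Es a c)"
    by (rule finite_subset[of _ "{..<length Es}"]) (auto simp: path_edges_def)
  ultimately have c1: "card (path_edges Es a c) \<ge> 1"
    by (metis One_nat_def Suc_leI card_gt_0_iff empty_iff)
  let ?S = "{card (path_edges Es i j) | i j. i < n \<and> j < n}"
  have fin: "finite ?S"
  proof -
    have "?S \<subseteq> (\<lambda>(i, j). card (path_edges Es i j)) ` ({..<n} \<times> {..<n})" by auto
    then show ?thesis by (rule finite_subset) auto
  qed
  have "card (path_edges Es a c) \<in> ?S" using ab by blast
  then have "card (path_edges Es a c) \<le> Max ?S" using fin by (rule Max_ge[rotated])
  then show ?thesis using c1 unfolding E_max_def by simp
qed




lemma Vmat_carrier[simp]: "Vmat w Es \<in> carrier_mat (length Es) (length Es)"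
  by (rule carrier_matI) (simp_all add: Vmat_def)

lemma Vmat_dims[simp]: "dim_row (Vmat w Es) = length Es" "dim_col (Vmat w Es) = length Es"
  by (simp_all add: Vmat_def)

lemma vecs_carrier[simp]:
  "Fvec Es k X \<in> carrier_vec (length Es)" "pvec w Es \<in> carrier_vec (length Es)"
  "logR Es k X \<in> carrier_vec (length Es)" "logrho w Es \<in> carrier_vec (length Es)"
  "logw n w \<in> carrier_vec n"
  by (auto intro!: carrier_vecI simp: Fvec_def pvec_def logR_def logrho_def logw_def)

lemma Vmv_carrier[simp]: "Vmat w Es *\<^sub>v (Fvec Es k X - pvec w Es) \<in> carrier_vec (length Es)"
  by (intro carrier_vecI) (simp add: Vmat_def)

lemma Delta_carrier[simp]: "Delta w Es k X \<in> carrier_vec (length Es)"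
  by (intro carrier_vecI) (simp add: Delta_def logR_def Vmat_def)

lemma Vmv_index:
  assumes e: "e < length Es"
  shows "(Vmat w Es *\<^sub>v (Fvec Es k X - pvec w Es)) $ e = v_edge w Es e * (F_edge k X e - p_edge w Es e)"
proof -
  have "(Vmat w Es *\<^sub>v (Fvec Es k X - pvec w Es)) $ e = row (Vmat w Es) e \<bullet> (Fvec Es k X - pvec w Es)"
    using e by (simp add: Vmat_def)
  also have "\<dots> = (\<Sum>f\<in>{0..<length Es}. (if e = f then v_edge w Es e else 0) * (F_edge k X f - p_edge w Es f))"
    unfolding scalar_prod_def using e by (intro sum.cong) (simp_all add: Vmat_def Fvec_def pvec_def)
  also have "\<dots> = (\<Sum>f\<in>{0..<length Es}. (if e = f then v_edge w Es e * (F_edge k X f - p_edge w Es f) else 0))"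
    by (rule sum.cong) auto
  also have "\<dots> = v_edge w Es e * (F_edge k X e - p_edge w Es e)"
    using e by simp
  finally show ?thesis .
qed

lemma Delta_index:
  assumes e: "e < length Es"
  shows "Delta w Es k X $ e = ln (R_edge k X e) - ln (rho_edge w Es e) - v_edge w Es e * (F_edge k X e - p_edge w Es e)"
  using e Vmv_index[OF e, of w k X] by (simp add: Delta_def logR_def logrho_def)

lemma logrho_eq:
  assumes sg: "simple_graph_edges n Es" and w: "\<forall>i<n. w i > 0"
  shows "logrho w Es = transpose_mat (incidence n Es) *\<^sub>v logw n w"
proof (intro eq_vecI)
  fix e assume "e < dim_vec (transpose_mat (incidence n Es) *\<^sub>v logw n w)"
  then have e: "e < length Es" by simp
  note ab = edge_bounds[OF sg e]
  have "(transpose_mat (incidence n Es) *\<^sub>v logw n w) $ e = ln (w (fst (Es ! e))) - ln (w (snd (Es ! e)))"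
    using BT_vec[OF sg _ e, of "logw n w"] ab by (simp add: logw_def)
  also have "\<dots> = ln (rho_edge w Es e)"
  proof -
    have "w (fst (Es ! e)) > 0" "w (snd (Es ! e)) > 0" using w ab by auto
    then show ?thesis unfolding rho_edge_def by (simp add: ln_div)
  qed
  finally show "logrho w Es $ e = (transpose_mat (incidence n Es) *\<^sub>v logw n w) $ e"
    using e by (simp add: logrho_def)
qed (simp add: logrho_def)

lemma main_eq:
  assumes sg: "simple_graph_edges n Es" and cg: "connected_graph n Es" and n: "n > 0"
    and w: "\<forall>i<n. w i > 0" and s: "(\<Sum>i<n. ln (w i)) = 0"
  shows "logWhat n Es k X - logw n w =
     pinv (laplacian n Es) *\<^sub>v (incidence n Es *\<^sub>v (Vmat w Es *\<^sub>v (Fvec Es k X - pvec w Es)))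
     + pinv (laplacian n Es) *\<^sub>v (incidence n Es *\<^sub>v (Delta w Es k X))"
proof -
  let ?P = "pinv (laplacian n Es)" and ?B = "incidence n Es"
  let ?y1 = "Vmat w Es *\<^sub>v (Fvec Es k X - pvec w Es)" and ?y2 = "Delta w Es k X"
  have Pc: "?P \<in> carrier_mat n n" by (rule pinv_L_carrier[OF sg cg n])
  have y12: "?y1 + ?y2 = logR Es k X - logrho w Es"
    by (intro eq_vecI) (auto simp: Delta_def logR_def logrho_def Vmat_def)
  have By1: "?B *\<^sub>v ?y1 \<in> carrier_vec n" and By2: "?B *\<^sub>v ?y2 \<in> carrier_vec n"
    by (intro carrier_vecI, simp)+
  have "?P *\<^sub>v (?B *\<^sub>v ?y1) + ?P *\<^sub>v (?B *\<^sub>v ?y2) = ?P *\<^sub>v (?B *\<^sub>v ?y1 + ?B *\<^sub>v ?y2)"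
    using mult_add_distrib_mat_vec[OF Pc By1 By2] by simp
  also have "?B *\<^sub>v ?y1 + ?B *\<^sub>v ?y2 = ?B *\<^sub>v (?y1 + ?y2)"
    using mult_add_distrib_mat_vec[OF incidence_carrier Vmv_carrier Delta_carrier] by simp
  also have "\<dots> = ?B *\<^sub>v logR Es k X - ?B *\<^sub>v logrho w Es"
    unfolding y12 using mult_minus_distrib_mat_vec[OF incidence_carrier vecs_carrier(3) vecs_carrier(4)] by simp
  also have "?P *\<^sub>v (?B *\<^sub>v logR Es k X - ?B *\<^sub>v logrho w Es)
      = ?P *\<^sub>v (?B *\<^sub>v logR Es k X) - ?P *\<^sub>v (?B *\<^sub>v logrho w Es)"
    by (rule mult_minus_distrib_mat_vec[OF Pc]) (intro carrier_vecI, simp)+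
  also have "?B *\<^sub>v logrho w Es = laplacian n Es *\<^sub>v logw n w"
    unfolding logrho_eq[OF sg w] using L_mult_vec[OF vecs_carrier(5)] by simp
  also have "?P *\<^sub>v (laplacian n Es *\<^sub>v logw n w) = logw n w"
  proof (rule pinv_L_apply[OF sg cg n vecs_carrier(5)])
    show "(\<Sum>i<n. logw n w $ i) = 0" using s by (simp add: logw_def)
  qed
  finally show ?thesis unfolding logWhat_def by simp
qed

lemma edge_params:
  fixes wa wb b :: real
  assumes wa: "wa > 0" and wb: "wb > 0" and b1: "wa / wb \<le> b" and b2: "wb / wa \<le> b"
  defines "p \<equiv> wa / (wa + wb)"
  shows "0 < p" "p < 1" "wa / wb = p / (1 - p)" "wa / wb + 2 + 1 / (wa / wb) = 1 / (p * (1 - p))"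
    "p * (1 - p) \<ge> 1 / (4 * b)" "b > 0"
proof -
  show p0: "0 < p" unfolding p_def using wa wb by simp
  show p1: "p < 1" unfolding p_def using wa wb by simp
  have q: "1 - p = wb / (wa + wb)" unfolding p_def using wa wb by (simp add: field_simps)
  have "p / (1 - p) = wa / (wa + wb) / (wb / (wa + wb))" unfolding q unfolding p_def by simp
  also have "\<dots> = wa / wb" using wa wb by (simp add: divide_divide_eq_right)
  finally show "wa / wb = p / (1 - p)" by simp
  have v: "wa / wb + 2 + 1 / (wa / wb) = 1 / (p * (1 - p))"
    unfolding q unfolding p_def using wa wb by (simp add: field_simps power2_eq_square)
  then show "wa / wb + 2 + 1 / (wa / wb) = 1 / (p * (1 - p))" .
  have b1': "b \<ge> 1"
  proof (cases "wa \<ge> wb")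
    case True
    then have "1 \<le> wa / wb" using wb by simp
    then show ?thesis using b1 by linarith
  next
    case False
    then have "1 \<le> wb / wa" using wa by simp
    then show ?thesis using b2 by linarith
  qed
  then show b0: "b > 0" by simp
  have "1 / (wa / wb) = wb / wa" by simp
  then have "wa / wb + 2 + 1 / (wa / wb) \<le> 4 * b" using b1 b2 b1' by simp
  then have "1 / (p * (1 - p)) \<le> 4 * b" using v by simp
  moreover have "p * (1 - p) > 0" using p0 p1 by simp
  ultimately show "p * (1 - p) \<ge> 1 / (4 * b)" using b0
    by (simp add: field_simps)
qed




lemma exp_tail_bound:
  fixes n :: nat and \<delta> C :: real
  assumes n: "n > 0" and d0: "0 < \<delta>" and d1: "\<delta> \<le> exp (-1)" and hC: "C \<ge> 3 * ln (real n / \<delta>)"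
  shows "2 * real (n * n) * exp (- C) \<le> \<delta>" and "C \<ge> 3"
proof -
  have lnd: "ln \<delta> \<le> -1" using d0 d1 by (metis ln_exp ln_le_cancel_iff exp_gt_zero)
  have lnn: "ln (real n) \<ge> 0" using n by simp
  have l3: "ln (real n / \<delta>) = ln (real n) - ln \<delta>" using n d0 by (simp add: ln_div)
  show "C \<ge> 3" using hC lnd lnn l3 by linarith
  define L where "L = ln (2 * real (n * n) / \<delta>)"
  have L: "L = ln 2 + 2 * ln (real n) - ln \<delta>"
    unfolding L_def using n d0 by (simp add: ln_div ln_mult)
  have "ln 2 \<le> (1::real)" using ln_2_less_1 by simp
  then have "L \<le> C" using hC L l3 lnd lnn by linarith
  then have "exp (- C) \<le> exp (- L)" by simp
  also have "exp (- L) = \<delta> / (2 * real (n * n))"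
    unfolding L_def using n d0 by (simp add: exp_minus)
  finally have "exp (- C) \<le> \<delta> / (2 * real (n * n))" .
  then show "2 * real (n * n) * exp (- C) \<le> \<delta>" using n by (simp add: field_simps)
qed

lemma main_lemma:
  fixes n :: nat and Es :: "(nat \<times> nat) list" and w :: "nat \<Rightarrow> real" and b \<delta> C :: real and k :: nat
  assumes n: "0 < n" and sg: "simple_graph_edges n Es" and cg: "connected_graph n Es"
    and w: "\<forall>i<n. w i > 0" and wb: "\<forall>i<n. \<forall>j<n. w i / w j \<le> b"
    and s: "(\<Sum>i<n. ln (w i)) = 0"
    and d0: "0 < \<delta>" and d1: "\<delta> \<le> exp (-1)"
    and hC: "C \<ge> 3 * ln (real n / \<delta>)"
    and hk: "real k \<ge> 64 * b * (C + 1) * max (Omega_max n Es) (real (E_max n Es))"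
  shows "measure_pmf.prob (comparisons w Es k)
         {X. (\<forall>e<length Es. 0 < R_edge k X e) \<and>
             logWhat n Es k X - logw n w =
               mult_mat_vec (pinv (laplacian n Es)) (mult_mat_vec (incidence n Es) (mult_mat_vec (Vmat w Es) (Fvec Es k X - pvec w Es)))
               + mult_mat_vec (pinv (laplacian n Es)) (mult_mat_vec (incidence n Es) (Delta w Es k X)) \<and>
             (\<forall>e<length Es. \<bar>vec_index (Delta w Es k X) e\<bar> \<le> 64 * b * C / real k)}
         \<ge> 1 - \<delta>"
proof -
  let ?m = "length Es"
  let ?M = "comparisons w Es k"
  have b1: "b \<ge> 1" using wb n w by (metis div_self less_numeral_extra(3))
  note et = exp_tail_bound[OF n d0 d1 hC]
  have C3: "C \<ge> 3" by (rule et(2))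
  have kC: "real k \<ge> 64 * b * C" if m: "?m > 0"
  proof -
    have "real (E_max n Es) \<ge> 1" using E_max_ge1[OF sg m] by simp
    then have mx: "max (Omega_max n Es) (real (E_max n Es)) \<ge> 1" by simp
    have "64 * b * C \<le> 64 * b * (C + 1)" using b1 by simp
    also have "\<dots> \<le> 64 * b * (C + 1) * max (Omega_max n Es) (real (E_max n Es))"
    proof -
      have pos: "0 \<le> 64 * b * (C + 1)" using b1 C3 by simp
      show ?thesis using mult_left_mono[OF mx pos] by simp
    qed
    finally show ?thesis using hk by simp
  qed
  have k0: "k > 0" if m: "?m > 0"
  proof -
    have "64 * b * C \<ge> 64 * 1 * 3" using b1 C3 by (intro mult_mono) auto
    then have "real k > 0" using kC[OF m] by linarith
    then show ?thesis by simp
  qed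
  define pe where "pe e = p_edge w Es e" for e
  define se where "se e = pe e * (1 - pe e)" for e
  define G where "G = {X. \<forall>e<?m. (F_edge k X e - pe e)\<^sup>2 \<le> 4 * se e * C / real k}"
  define Bad where "Bad e = {X. (real (X e) / real k - pe e)\<^sup>2 > 4 * se e * C / real k}" for e
  have params: "0 < pe e \<and> pe e < 1 \<and> rho_edge w Es e = pe e / (1 - pe e) \<and>
      v_edge w Es e = 1 / (pe e * (1 - pe e)) \<and> se e \<ge> 1 / (4 * b) \<and> b > 0" if e: "e < ?m" for e
  proof -
    note ab = edge_bounds[OF sg e]
    have wa: "w (fst (Es ! e)) > 0" and wb': "w (snd (Es ! e)) > 0" using w ab by auto
    have r1: "w (fst (Es ! e)) / w (snd (Es ! e)) \<le> b" and r2: "w (snd (Es ! e)) / w (fst (Es ! e)) \<le> b"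
      using wb ab by auto
    note ep = edge_params[OF wa wb' r1 r2]
    show ?thesis using ep unfolding pe_def se_def p_edge_def rho_edge_def v_edge_def by simp
  qed
  have GT: "G \<subseteq> {X. (\<forall>e<length Es. 0 < R_edge k X e) \<and>
             logWhat n Es k X - logw n w =
               mult_mat_vec (pinv (laplacian n Es)) (mult_mat_vec (incidence n Es) (mult_mat_vec (Vmat w Es) (Fvec Es k X - pvec w Es)))
               + mult_mat_vec (pinv (laplacian n Es)) (mult_mat_vec (incidence n Es) (Delta w Es k X)) \<and>
             (\<forall>e<length Es. \<bar>vec_index (Delta w Es k X) e\<bar> \<le> 64 * b * C / real k)}"
  proof
    fix X assume X: "X \<in> G"
    have db: "F_edge k X e > 0 \<and> 1 - F_edge k X e > 0 \<and>
        \<bar>ln (F_edge k X e / (1 - F_edge k X e)) - ln (pe e / (1 - pe e)) - (1 / (pe e * (1 - pe e))) * (F_edge k X e - pe e)\<bar>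
          \<le> 64 * b * C / real k" if e: "e < ?m" for e
    proof -
      have m: "?m > 0" by (rule le_less_trans[OF _ e]) simp
      have pp: "0 < pe e" "pe e < 1" "se e \<ge> 1 / (4 * b)" "b > 0" using params[OF e] by auto
      have dd: "(F_edge k X e - pe e)\<^sup>2 \<le> 4 * se e * C / real k" using X e unfolding G_def by auto
      note r = delta_bound[of "pe e" "1 - pe e" "se e" b "real k" C "F_edge k X e - pe e" "F_edge k X e"]
      have "0 < pe e" "0 < 1 - pe e" using pp by auto
      moreover have "real k > 0" using k0[OF m] by simp
      moreover have "C \<ge> 0" using C3 by simp
      ultimately show ?thesis
        using r pp dd kC[OF m] unfolding se_def by auto
    qed
    show "X \<in> {X. (\<forall>e<length Es. 0 < R_edge k X e) \<and>
             logWhat n Es k X - logw n w =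
               mult_mat_vec (pinv (laplacian n Es)) (mult_mat_vec (incidence n Es) (mult_mat_vec (Vmat w Es) (Fvec Es k X - pvec w Es)))
               + mult_mat_vec (pinv (laplacian n Es)) (mult_mat_vec (incidence n Es) (Delta w Es k X)) \<and>
             (\<forall>e<length Es. \<bar>vec_index (Delta w Es k X) e\<bar> \<le> 64 * b * C / real k)}"
    proof (intro CollectI conjI allI impI)
      fix e assume e: "e < ?m"
      show "0 < R_edge k X e" using db[OF e] unfolding R_edge_def by simp
    next
      show "logWhat n Es k X - logw n w =
               mult_mat_vec (pinv (laplacian n Es)) (mult_mat_vec (incidence n Es) (mult_mat_vec (Vmat w Es) (Fvec Es k X - pvec w Es)))
               + mult_mat_vec (pinv (laplacian n Es)) (mult_mat_vec (incidence n Es) (Delta w Es k X))"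
        by (rule main_eq[OF sg cg n w s])
    next
      fix e assume e: "e < ?m"
      have "vec_index (Delta w Es k X) e = ln (F_edge k X e / (1 - F_edge k X e)) - ln (pe e / (1 - pe e))
          - (1 / (pe e * (1 - pe e))) * (F_edge k X e - pe e)"
        using Delta_index[OF e, of w k X] params[OF e] unfolding R_edge_def pe_def by simp
      then show "\<bar>vec_index (Delta w Es k X) e\<bar> \<le> 64 * b * C / real k" using db[OF e] by simp
    qed
  qed
  have compl: "UNIV - G = (\<Union>e\<in>{..<?m}. Bad e)"
    unfolding G_def Bad_def F_edge_def by (auto simp: not_le)
  have badp: "measure_pmf.prob ?M (Bad e) \<le> 2 * exp (- C)" if e: "e \<in> {..<?m}" for e
  proof -
    have e': "e < ?m" using e by simp
    have m: "?m > 0" by (rule le_less_trans[OF _ e']) simp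
    have pp: "0 < pe e" "pe e < 1" "se e \<ge> 1 / (4 * b)" "b > 0" using params[OF e'] by auto
    have Cks: "C \<le> real k * se e"
    proof -
      have "C \<le> 16 * C" using C3 by simp
      also have "16 * C = (64 * b * C) * (1 / (4 * b))" using pp by (simp add: field_simps)
      also have "\<dots> \<le> real k * se e"
        using kC[OF m] pp C3 by (intro mult_mono) auto
      finally show ?thesis .
    qed
    have "measure_pmf.prob ?M (Bad e) = measure_pmf.prob (binomial_pmf k (p_edge w Es e))
          {x. (real x / real k - pe e)\<^sup>2 > 4 * se e * C / real k}"
      unfolding Bad_def by (rule marginal_prob[OF e'])
    also have "\<dots> \<le> 2 * exp (- C)"
      unfolding pe_def[symmetric]
      by (rule edge_bad_prob) (use pp k0[OF m] C3 Cks se_def in auto)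
    finally show ?thesis .
  qed
  have "measure_pmf.prob ?M (UNIV - G) \<le> (\<Sum>e\<in>{..<?m}. measure_pmf.prob ?M (Bad e))"
    unfolding compl by (rule measure_pmf.finite_measure_subadditive_finite) auto
  also have "\<dots> \<le> (\<Sum>e\<in>{..<?m}. 2 * exp (- C))" by (rule sum_mono) (rule badp)
  also have "\<dots> = real ?m * (2 * exp (- C))" by simp
  also have "\<dots> \<le> real (n * n) * (2 * exp (- C))"
  proof (rule mult_right_mono)
    show "real ?m \<le> real (n * n)" using length_le[OF sg] by (simp only: of_nat_le_iff)
  qed simp
  also have "\<dots> \<le> \<delta>" using et(1) by simp
  finally have "measure_pmf.prob ?M (UNIV - G) \<le> \<delta>" .
  moreover have "measure_pmf.prob ?M (UNIV - G) = 1 - measure_pmf.prob ?M G"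
    using measure_pmf.prob_compl[of G ?M] by simp
  ultimately have "measure_pmf.prob ?M G \<ge> 1 - \<delta>" by simp
  also have "measure_pmf.prob ?M G \<le> measure_pmf.prob ?M {X. (\<forall>e<length Es. 0 < R_edge k X e) \<and>
             logWhat n Es k X - logw n w =
               mult_mat_vec (pinv (laplacian n Es)) (mult_mat_vec (incidence n Es) (mult_mat_vec (Vmat w Es) (Fvec Es k X - pvec w Es)))
               + mult_mat_vec (pinv (laplacian n Es)) (mult_mat_vec (incidence n Es) (Delta w Es k X)) \<and>
             (\<forall>e<length Es. \<bar>vec_index (Delta w Es k X) e\<bar> \<le> 64 * b * C / real k)}"
    using GT by (intro measure_pmf.finite_measure_mono) auto
  finally show ?thesis .
qed

theorem lemma2:
  "\<exists>c1 c2 C0 :: real. c1 > 0 \<and> c2 > 0 \<and> C0 > 0 \<and>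
    (\<forall>(n::nat) (Es :: (nat \<times> nat) list) (w :: nat \<Rightarrow> real) (b::real) (\<delta>::real) (C::real) (k::nat).
       0 < n \<longrightarrow> simple_graph_edges n Es \<longrightarrow> connected_graph n Es \<longrightarrow>
       (\<forall>i<n. w i > 0) \<longrightarrow> (\<forall>i<n. \<forall>j<n. w i / w j \<le> b) \<longrightarrow>
       (\<Sum>i<n. ln (w i)) = 0 \<longrightarrow>
       0 < \<delta> \<longrightarrow> \<delta> \<le> exp (-1) \<longrightarrow>
       C \<ge> c1 * ln (real n / \<delta>) \<longrightarrow>
       real k \<ge> c2 * b * (C + 1) * max (Omega_max n Es) (real (E_max n Es)) \<longrightarrow>
       measure_pmf.prob (comparisons w Es k)
         {X. (\<forall>e<length Es. 0 < R_edge k X e) \<and>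
             logWhat n Es k X - logw n w =
               mult_mat_vec (pinv (laplacian n Es)) (mult_mat_vec (incidence n Es) (mult_mat_vec (Vmat w Es) (Fvec Es k X - pvec w Es)))
               + mult_mat_vec (pinv (laplacian n Es)) (mult_mat_vec (incidence n Es) (Delta w Es k X)) \<and>
             (\<forall>e<length Es. \<bar>vec_index (Delta w Es k X) e\<bar> \<le> C0 * b * C / real k)}
         \<ge> 1 - \<delta>)"
  apply (rule exI[of _ "3::real"], rule exI[of _ "64::real"], rule exI[of _ "64::real"])
  apply (intro conjI allI impI)
     apply simp
    apply simp
   apply simp
  apply (rule main_lemma; assumption)
  done



end
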